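(* Let $S$ be a ground set, let $f$ be a function from subsets of $S$ to subsets of $S$, let $t\ge 1$ be an integer and $u=\lfloor(\frac{t}{2}+1)^2\rfloor$. A set $\mathcal{C}\subseteq S$ is a $t$-parent-identifying scheme under the $f$-channel if and only if there is no minimal forbidden configuration in $\mathcal{C}$ of size at most $u$.
   Context: Here $S$ is $Q^n$ or $2^Q$ for a finite set $Q$. $\mathcal{C}\subseteq S$ is a $t$-parent-identifying scheme under the $f$-channel if for every $\mathcal{C}'\subseteq\mathcal{C}$ with $|\mathcal{C}'|\le t$ and every $d\in f(\mathcal{C}')$, we have $\bigcap_{\mathcal{P}\subseteq\mathcal{C}:\,|\mathcal{P}|\le t,\ d\in f(\mathcal{P})}\mathcal{P}\neq\emptyset$. A configuration in $\mathcal{C}$ is a collection $\mathcal{F}=\{\mathcal{F}_1,\dots,\mathcal{F}_m\}$ of subsets $\mathcal{F}_i\subseteq\mathcal{C}$ with $|\mathcal{F}_i|\le t$ such that $\bigcap_{1\le i\le m}\mathcal{F}_i=\emptyset$; it is minimal if $\bigcap_{j\neq i}\mathcal{F}_j\neq\emptyset$ for every $1\le i\le m$. Its size is $|U(\mathcal{F})|$ where $U(\mathcal{F})=\bigcup_{i}\mathcal{F}_i$. A (minimal) forbidden configuration is a (minimal) configuration with $f(\mathcal{F}_1)\cap\cdots\cap f(\mathcal{F}_m)\neq\emptyset$. *)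

theory Defs
  imports Complex_Main
begin

definition ipp_scheme :: "('a set \<Rightarrow> 'a set) \<Rightarrow> nat \<Rightarrow> 'a set \<Rightarrow> bool" where
  "ipp_scheme f t C \<longleftrightarrow>
     (\<forall>C'. C' \<subseteq> C \<and> finite C' \<and> card C' \<le> t \<longrightarrow>
        (\<forall>d \<in> f C'. \<Inter>{P. P \<subseteq> C \<and> finite P \<and> card P \<le> t \<and> d \<in> f P} \<noteq> {}))"

definition configuration :: "nat \<Rightarrow> 'a set \<Rightarrow> 'a set set \<Rightarrow> bool" where
  "configuration t C F \<longleftrightarrow> finite F \<and> F \<noteq> {} \<and>
     (\<forall>X \<in> F. X \<subseteq> C \<and> finite X \<and> card X \<le> t) \<and> \<Inter>F = {}"

definition minimal_configuration :: "nat \<Rightarrow> 'a set \<Rightarrow> 'a set set \<Rightarrow> bool" where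
  "minimal_configuration t C F \<longleftrightarrow> configuration t C F \<and> (\<forall>X \<in> F. \<Inter>(F - {X}) \<noteq> {})"

definition minimal_forbidden_configuration ::
  "('a set \<Rightarrow> 'a set) \<Rightarrow> nat \<Rightarrow> 'a set \<Rightarrow> 'a set set \<Rightarrow> bool" where
  "minimal_forbidden_configuration f t C F \<longleftrightarrow>
     minimal_configuration t C F \<and> \<Inter>(f ` F) \<noteq> {}"

definition config_size :: "'a set set \<Rightarrow> nat" where
  "config_size F = card (\<Union>F)"

end

theory Submission
  imports Defs
begin

lemma arith_bound:
  fixes m t :: nat
  assumes "m \<le> t + 1"
  shows "m + m * (t - (m - 1)) \<le> nat \<lfloor>(real t / 2 + 1) ^ 2\<rfloor>"
proof -
  have e: "real (m + m * (t - (m - 1))) = real m * (real t + 2 - real m)"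
  proof (cases m)
    case 0 then show ?thesis by simp
  next
    case (Suc k)
    then have "t - (m - 1) = t - k" by simp
    moreover have "real (t - k) = real t - real k" using assms Suc by simp
    ultimately have "real (m + m * (t - (m - 1))) = real m + real m * (real t - real k)"
      by (simp only: of_nat_add of_nat_mult)
    then show ?thesis using Suc by (simp add: algebra_simps)
  qed
  have "real m * (real t + 2 - real m) \<le> (real t / 2 + 1) ^ 2"
  proof -
    have "0 \<le> (real t + 2 - 2 * real m) ^ 2" by simp
    then show ?thesis by (simp add: power2_eq_square algebra_simps)
  qed
  then have "real (m + m * (t - (m - 1))) \<le> (real t / 2 + 1) ^ 2" using e by simp
  then show ?thesis by (simp add: le_nat_floor)
qed

lemma size_bound:
  assumes "minimal_configuration t C F"
  shows "config_size F \<le> nat \<lfloor>(real t / 2 + 1) ^ 2\<rfloor>"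
proof -
  have fin: "finite F" and ne: "F \<noteq> {}" and sub: "\<And>X. X \<in> F \<Longrightarrow> finite X \<and> card X \<le> t"
    and empt: "\<Inter>F = {}" and mi: "\<And>X. X \<in> F \<Longrightarrow> \<Inter>(F - {X}) \<noteq> {}"
    using assms unfolding minimal_configuration_def configuration_def by auto
  define a where "a = (\<lambda>X. SOME x. x \<in> \<Inter>(F - {X}))"
  have ain: "a X \<in> \<Inter>(F - {X})" if "X \<in> F" for X
    unfolding a_def using mi[OF that] by (metis ex_in_conv someI_ex)
  have anot: "a X \<notin> X" if "X \<in> F" for X
  proof
    assume "a X \<in> X"
    then have "a X \<in> \<Inter>F" using ain[OF that] by auto
    then show False using empt by auto
  qed
  have inj: "inj_on a F"
  proof (rule inj_onI)
    fix X Y assume X: "X \<in> F" and Y: "Y \<in> F" and eq: "a X = a Y"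
    show "X = Y"
    proof (rule ccontr)
      assume "X \<noteq> Y"
      then have "a X \<in> Y" using ain[OF X] Y by auto
      then show False using anot[OF Y] eq by simp
    qed
  qed
  define A where "A = a ` F"
  define m where "m = card F"
  have cA: "card A = m" unfolding A_def m_def using card_image[OF inj] .
  have finA: "finite A" unfolding A_def using fin by simp
  have XA: "X \<inter> A = A - {a X}" if "X \<in> F" for X
    using ain anot that unfolding A_def by auto
  have cXA: "card (X \<inter> A) = m - 1" if "X \<in> F" for X
    using XA[OF that] cA finA that unfolding A_def by (simp add: card_Diff_singleton)
  have cXmA: "card (X - A) \<le> t - (m - 1)" and mt: "m - 1 \<le> t" if "X \<in> F" for X
  proof -
    have fX: "finite X" and ct: "card X \<le> t" using sub[OF that] by auto
    have "card X = card (X \<inter> A) + card (X - A)"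
      using fX by (metis card_Int_Diff finite_Int)
    then show "card (X - A) \<le> t - (m - 1)" "m - 1 \<le> t" using cXA[OF that] ct by auto
  qed
  obtain X0 where X0: "X0 \<in> F" using ne by auto
  have m1: "m \<le> t + 1" using mt[OF X0] by simp
  have "\<Union>F \<subseteq> A \<union> (\<Union>X\<in>F. X - A)" by auto
  then have "card (\<Union>F) \<le> card (A \<union> (\<Union>X\<in>F. X - A))"
    by (intro card_mono) (use fin finA sub in auto)
  also have "\<dots> \<le> card A + card (\<Union>X\<in>F. X - A)" by (rule card_Un_le)
  also have "card (\<Union>X\<in>F. X - A) \<le> (\<Sum>X\<in>F. card (X - A))" by (rule card_UN_le[OF fin])
  also have "\<dots> \<le> (\<Sum>X\<in>F. t - (m - 1))" by (rule sum_mono) (rule cXmA)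
  also have "\<dots> = m * (t - (m - 1))" unfolding m_def by simp
  finally have "card (\<Union>F) \<le> m + m * (t - (m - 1))" using cA by simp
  also have "\<dots> \<le> nat \<lfloor>(real t / 2 + 1) ^ 2\<rfloor>" by (rule arith_bound[OF m1])
  finally show ?thesis unfolding config_size_def .
qed

theorem proposition1:
  fixes S :: "'a set" and f :: "'a set \<Rightarrow> 'a set" and t :: nat and C :: "'a set"
  assumes "finite S"
    and "\<forall>X. X \<subseteq> S \<longrightarrow> f X \<subseteq> S"
    and "t \<ge> 1"
    and "C \<subseteq> S"
  shows "ipp_scheme f t C \<longleftrightarrow>
    \<not> (\<exists>F. minimal_forbidden_configuration f t C F \<and>
           config_size F \<le> nat \<lfloor>(real t / 2 + 1) ^ 2\<rfloor>)"
proof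
  assume ipp: "ipp_scheme f t C"
  show "\<not> (\<exists>F. minimal_forbidden_configuration f t C F \<and>
           config_size F \<le> nat \<lfloor>(real t / 2 + 1) ^ 2\<rfloor>)"
  proof
    assume "\<exists>F. minimal_forbidden_configuration f t C F \<and>
           config_size F \<le> nat \<lfloor>(real t / 2 + 1) ^ 2\<rfloor>"
    then obtain F where mf: "minimal_forbidden_configuration f t C F" by blast
    then have ne: "F \<noteq> {}" and sub: "\<And>X. X \<in> F \<Longrightarrow> X \<subseteq> C \<and> finite X \<and> card X \<le> t"
      and empt: "\<Inter>F = {}" and fi: "\<Inter>(f ` F) \<noteq> {}"
      unfolding minimal_forbidden_configuration_def minimal_configuration_def configuration_def
      by auto
    obtain d where d: "d \<in> \<Inter>(f ` F)" using fi by auto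
    obtain X where X: "X \<in> F" using ne by auto
    have "d \<in> f X" using d X by auto
    then have "\<Inter>{P. P \<subseteq> C \<and> finite P \<and> card P \<le> t \<and> d \<in> f P} \<noteq> {}"
      using ipp sub[OF X] unfolding ipp_scheme_def by blast
    moreover have "\<Inter>{P. P \<subseteq> C \<and> finite P \<and> card P \<le> t \<and> d \<in> f P} \<subseteq> \<Inter>F"
      using sub d by auto
    ultimately show False using empt by auto
  qed
next
  assume nf: "\<not> (\<exists>F. minimal_forbidden_configuration f t C F \<and>
           config_size F \<le> nat \<lfloor>(real t / 2 + 1) ^ 2\<rfloor>)"
  show "ipp_scheme f t C"
  proof (rule ccontr)
    assume "\<not> ipp_scheme f t C"
    then obtain d where G0: "\<Inter>{P. P \<subseteq> C \<and> finite P \<and> card P \<le> t \<and> d \<in> f P} = {}"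
      unfolding ipp_scheme_def by blast
    define G where "G = {P. P \<subseteq> C \<and> finite P \<and> card P \<le> t \<and> d \<in> f P}"
    have finC: "finite C" using assms(1,4) finite_subset by blast
    have finG: "finite G" unfolding G_def
      by (rule finite_subset[of _ "Pow C"]) (use finC in auto)
    define Q where "Q = (\<lambda>H. H \<subseteq> G \<and> \<Inter>H = {})"
    have QG: "Q G" using G0 unfolding Q_def G_def by simp
    obtain F where QF: "Q F" and minF: "\<And>H. Q H \<Longrightarrow> card F \<le> card H"
      using ex_has_least_nat[of Q G card] QG by blast
    have FG: "F \<subseteq> G" and eF: "\<Inter>F = {}" using QF unfolding Q_def by auto
    have finF: "finite F" using FG finG finite_subset by blast
    have neF: "F \<noteq> {}" using eF by auto
    have mi: "\<Inter>(F - {X}) \<noteq> {}" if "X \<in> F" for X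
    proof
      assume "\<Inter>(F - {X}) = {}"
      then have "Q (F - {X})" using FG unfolding Q_def by auto
      then have "card F \<le> card (F - {X})" by (rule minF)
      moreover have "card (F - {X}) < card F" using finF that by (meson card_Diff1_less)
      ultimately show False by simp
    qed
    have mc: "minimal_configuration t C F"
      unfolding minimal_configuration_def configuration_def
      using finF neF eF mi FG unfolding G_def by auto
    have "\<Inter>(f ` F) \<noteq> {}"
    proof -
      have "d \<in> \<Inter>(f ` F)" using FG unfolding G_def by auto
      then show ?thesis by auto
    qed
    then have "minimal_forbidden_configuration f t C F"
      using mc unfolding minimal_forbidden_configuration_def by simp
    moreover have "config_size F \<le> nat \<lfloor>(real t / 2 + 1) ^ 2\<rfloor>" by (rule size_bound[OF mc])
    ultimately show False using nf by blast
  qed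
qed

end
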